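(* Consider Configuration II (two agents in mutual beacon-referenced pursuit of a single beacon at the origin, $b=0$) with parameters $\mu>0$, $\lambda\in(0,1)$, $a\in[-1,1]$ and $a_0\in[-1,1]\setminus\{0\}$. (a) If $(1-\lambda)a+\lambda a_0<0$, a circling equilibrium exists with $$\bar x_1=\bar x_2=0,\ \bar x_{1b1}=\bar x_{2b2}=0,\ \tilde x=-1,\ \rho_{1b1}=\rho_{2b2}=\frac{1}{-\mu\bigl((1-\lambda)a+\lambda a_0\bigr)},\ \rho=2\rho_{1b1}.$$ (b) If $(1-\lambda)a+\lambda a_0<0$, $a_0<0$ and $a>0$, a circling equilibrium exists with $$\bar x_1=\bar x_2=0,\ \bar x_{1b1}=\bar x_{2b2}=0,\ \tilde x=1,\ \rho_{1b1}=\rho_{2b2}=\frac{\lambda a_0}{\mu\bigl((1-\lambda)^2a^2-\lambda^2a_0^2\bigr)},\ \rho=\frac{-2(1-\lambda)a}{\mu\bigl((1-\lambda)^2a^2-\lambda^2a_0^2\bigr)}.$$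
   Context: Two-agent setup: beacons $\mathbf r_{b1}=(0,0,-b)$, $\mathbf r_{b2}=(0,0,b)$ with $b\ge0$, $\hat{\mathbf b}=\mathbf r_{b2}-\mathbf r_{b1}=(0,0,2b)$. Agents $i=1,2$ have positions $\mathbf r_i\in\mathbb R^3$ and unit velocities $\mathbf x_i$. Let $\mathbf r=\mathbf r_1-\mathbf r_2$, $\mathbf r_{1b1}=\mathbf r_1-\mathbf r_{b1}$, $\mathbf r_{2b2}=\mathbf r_2-\mathbf r_{b2}$, $\rho=|\mathbf r|$, $\rho_{1b1}=|\mathbf r_{1b1}|$, $\rho_{2b2}=|\mathbf r_{2b2}|$, $\bar x_1=\mathbf x_1\cdot\mathbf r/\rho$, $\bar x_2=-\mathbf x_2\cdot\mathbf r/\rho$, $\bar x_{1b1}=\mathbf x_1\cdot\mathbf r_{1b1}/\rho_{1b1}$, $\bar x_{2b2}=\mathbf x_2\cdot\mathbf r_{2b2}/\rho_{2b2}$, $\tilde x=\mathbf x_1\cdot\mathbf x_2$, $\hat r_i=\mathbf r_i\cdot\hat{\mathbf b}$, $\hat x_i=\mathbf x_i\cdot\hat{\mathbf b}$. With gain $\mu>0$, weight $\lambda\in(0,1)$, common agent-bearing parameter $a\in[-1,1]$ and common beacon-bearing parameter $a_0\in[-1,1]$, the closed-loop dynamics are $\dot{\mathbf r}_i=\mathbf x_i$ and $$\dot{\mathbf x}_1=-(1-\lambda)\mu(\bar x_1-a)\Bigl(\tfrac{\mathbf r}{\rho}-\bar x_1\mathbf x_1\Bigr)-\lambda\mu(\bar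 x_{1b1}-a_0)\Bigl(\tfrac{\mathbf r_{1b1}}{\rho_{1b1}}-\bar x_{1b1}\mathbf x_1\Bigr),$$ $$\dot{\mathbf x}_2=-(1-\lambda)\mu(\bar x_2-a)\Bigl(-\tfrac{\mathbf r}{\rho}-\bar x_2\mathbf x_2\Bigr)-\lambda\mu(\bar x_{2b2}-a_0)\Bigl(\tfrac{\mathbf r_{2b2}}{\rho_{2b2}}-\bar x_{2b2}\mathbf x_2\Bigr).$$ The shape variables $(\bar x_1,\bar x_2,\bar x_{1b1},\bar x_{2b2},\tilde x,\rho,\rho_{1b1},\rho_{2b2},\hat r_1,\hat r_2,\hat x_1,\hat x_2)$ have time derivatives along this flow that depend only on the shape variables. A circling equilibrium is a state with $\rho,\rho_{1b1},\rho_{2b2}>0$ at which the time derivatives of all shape variables vanish. Configuration II is the case $b=0$ (single beacon at the origin, so $\hat{\mathbf b}=\mathbf 0$ and $\hat r_i=\hat x_i=0$). *)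

theory Defs
  imports "HOL-Analysis.Analysis"
begin

text \<open>Two-agent beacon-referenced pursuit. State: positions r1 r2 and unit
velocities x1 x2 in R^3; beacon half-separation b.\<close>

definition rb1 :: "real \<Rightarrow> real^3" where "rb1 b = vector [0, 0, -b]"
definition rb2 :: "real \<Rightarrow> real^3" where "rb2 b = vector [0, 0, b]"
definition bhat :: "real \<Rightarrow> real^3" where "bhat b = rb2 b - rb1 b"

definition rho :: "real^3 \<Rightarrow> real^3 \<Rightarrow> real" where
  "rho r1 r2 = norm (r1 - r2)"
definition rho1b1 :: "real \<Rightarrow> real^3 \<Rightarrow> real" where
  "rho1b1 b r1 = norm (r1 - rb1 b)"
definition rho2b2 :: "real \<Rightarrow> real^3 \<Rightarrow> real" where
  "rho2b2 b r2 = norm (r2 - rb2 b)"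

definition xbar1 :: "real^3 \<Rightarrow> real^3 \<Rightarrow> real^3 \<Rightarrow> real" where
  "xbar1 r1 r2 x1 = (x1 \<bullet> (r1 - r2)) / rho r1 r2"
definition xbar2 :: "real^3 \<Rightarrow> real^3 \<Rightarrow> real^3 \<Rightarrow> real" where
  "xbar2 r1 r2 x2 = - (x2 \<bullet> (r1 - r2)) / rho r1 r2"
definition xbar1b1 :: "real \<Rightarrow> real^3 \<Rightarrow> real^3 \<Rightarrow> real" where
  "xbar1b1 b r1 x1 = (x1 \<bullet> (r1 - rb1 b)) / rho1b1 b r1"
definition xbar2b2 :: "real \<Rightarrow> real^3 \<Rightarrow> real^3 \<Rightarrow> real" where
  "xbar2b2 b r2 x2 = (x2 \<bullet> (r2 - rb2 b)) / rho2b2 b r2"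
definition xtilde :: "real^3 \<Rightarrow> real^3 \<Rightarrow> real" where
  "xtilde x1 x2 = x1 \<bullet> x2"
definition rhat :: "real \<Rightarrow> real^3 \<Rightarrow> real" where
  "rhat b r = r \<bullet> bhat b"
definition xhat :: "real \<Rightarrow> real^3 \<Rightarrow> real" where
  "xhat b x = x \<bullet> bhat b"

definition acc1 :: "real \<Rightarrow> real \<Rightarrow> real \<Rightarrow> real \<Rightarrow> real \<Rightarrow>
    real^3 \<Rightarrow> real^3 \<Rightarrow> real^3 \<Rightarrow> real^3 \<Rightarrow> real^3" where
  "acc1 mu lam a a0 b r1 r2 x1 x2 =
     - (((1 - lam) * mu * (xbar1 r1 r2 x1 - a)) *\<^sub>R
          ((1 / rho r1 r2) *\<^sub>R (r1 - r2) - xbar1 r1 r2 x1 *\<^sub>R x1))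
     - ((lam * mu * (xbar1b1 b r1 x1 - a0)) *\<^sub>R
          ((1 / rho1b1 b r1) *\<^sub>R (r1 - rb1 b) - xbar1b1 b r1 x1 *\<^sub>R x1))"

definition acc2 :: "real \<Rightarrow> real \<Rightarrow> real \<Rightarrow> real \<Rightarrow> real \<Rightarrow>
    real^3 \<Rightarrow> real^3 \<Rightarrow> real^3 \<Rightarrow> real^3 \<Rightarrow> real^3" where
  "acc2 mu lam a a0 b r1 r2 x1 x2 =
     - (((1 - lam) * mu * (xbar2 r1 r2 x2 - a)) *\<^sub>R
          (- ((1 / rho r1 r2) *\<^sub>R (r1 - r2)) - xbar2 r1 r2 x2 *\<^sub>R x2))
     - ((lam * mu * (xbar2b2 b r2 x2 - a0)) *\<^sub>R
          ((1 / rho2b2 b r2) *\<^sub>R (r2 - rb2 b) - xbar2b2 b r2 x2 *\<^sub>R x2))"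

definition shape_vars :: "real \<Rightarrow> real^3 \<Rightarrow> real^3 \<Rightarrow> real^3 \<Rightarrow> real^3 \<Rightarrow> real list" where
  "shape_vars b r1 r2 x1 x2 =
     [xbar1 r1 r2 x1, xbar2 r1 r2 x2, xbar1b1 b r1 x1, xbar2b2 b r2 x2, xtilde x1 x2,
      rho r1 r2, rho1b1 b r1, rho2b2 b r2, rhat b r1, rhat b r2, xhat b x1, xhat b x2]"

text \<open>Time derivative of a shape variable along the flow at a state = derivative at t = 0
 along the line through the state in the direction of the vector field
 (r1', r2', x1', x2') = (x1, x2, acc1, acc2).\<close>
definition circling_equilibrium :: "real \<Rightarrow> real \<Rightarrow> real \<Rightarrow> real \<Rightarrow> real \<Rightarrow>
    real^3 \<Rightarrow> real^3 \<Rightarrow> real^3 \<Rightarrow> real^3 \<Rightarrow> bool" where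
  "circling_equilibrium mu lam a a0 b r1 r2 x1 x2 \<longleftrightarrow>
     norm x1 = 1 \<and> norm x2 = 1 \<and>
     rho r1 r2 > 0 \<and> rho1b1 b r1 > 0 \<and> rho2b2 b r2 > 0 \<and>
     (\<forall>i < length (shape_vars b r1 r2 x1 x2).
        ((\<lambda>t. shape_vars b (r1 + t *\<^sub>R x1) (r2 + t *\<^sub>R x2)
                (x1 + t *\<^sub>R acc1 mu lam a a0 b r1 r2 x1 x2)
                (x2 + t *\<^sub>R acc2 mu lam a a0 b r1 r2 x1 x2) ! i)
          has_real_derivative 0) (at 0))"

end

theory Submission
  imports Defs
begin



lemma vec3_inner: "vector [a1,a2,a3] \<bullet> (vector [b1,b2,b3] :: real^3) = a1*b1+a2*b2+a3*b3"
  by (simp add: inner_vec_def sum_3)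

lemma rb0: "rb1 0 = 0" "rb2 0 = 0" "bhat 0 = 0"
  by (simp_all add: rb1_def rb2_def bhat_def vec_eq_iff forall_3)

lemma d_lin_inner:
  fixes u du v dv :: "'a::real_inner"
  shows "((\<lambda>t. (u + t *\<^sub>R du) \<bullet> (v + t *\<^sub>R dv)) has_real_derivative (du \<bullet> v + u \<bullet> dv)) (at 0)"
proof -
  have e: "(\<lambda>t. (u + t *\<^sub>R du) \<bullet> (v + t *\<^sub>R dv)) = (\<lambda>t. u \<bullet> v + t * (du \<bullet> v + u \<bullet> dv) + t^2 * (du \<bullet> dv))"
    by (rule ext) (simp add: inner_add_left inner_add_right algebra_simps power2_eq_square)
  show ?thesis unfolding e by (auto intro!: derivative_eq_intros)
qed

lemma d_norm:
  fixes u du :: "'a::real_inner"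
  assumes "u \<noteq> 0"
  shows "((\<lambda>t. norm (u + t *\<^sub>R du)) has_real_derivative (u \<bullet> du / norm u)) (at 0)"
proof -
  have e: "(\<lambda>t. norm (u + t *\<^sub>R du)) = (\<lambda>t. sqrt ((u + t *\<^sub>R du) \<bullet> (u + t *\<^sub>R du)))"
    by (rule ext) (simp add: norm_eq_sqrt_inner)
  have pos: "0 < u \<bullet> u" using assms by simp
  have "((\<lambda>t. sqrt ((u + t *\<^sub>R du) \<bullet> (u + t *\<^sub>R du))) has_real_derivative
        (inverse (sqrt (u \<bullet> u)) / 2) * (du \<bullet> u + u \<bullet> du)) (at 0)"
  proof -
    have "(sqrt has_real_derivative inverse (sqrt (u \<bullet> u)) / 2) (at ((\<lambda>t. (u + t *\<^sub>R du) \<bullet> (u + t *\<^sub>R du)) 0))"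
      using DERIV_real_sqrt[OF pos] by simp
    from DERIV_chain2[OF this d_lin_inner[of u du u du]] show ?thesis by simp
  qed
  moreover have "(inverse (sqrt (u \<bullet> u)) / 2) * (du \<bullet> u + u \<bullet> du) = u \<bullet> du / norm u"
    by (simp add: norm_eq_sqrt_inner inner_commute field_simps)
  ultimately show ?thesis unfolding e by simp
qed

lemma d_quot0:
  assumes "(f has_real_derivative 0) (at 0)" "f 0 = 0" "(g has_real_derivative g') (at 0)" "g 0 \<noteq> 0"
  shows "((\<lambda>t. f t / g t) has_real_derivative 0) (at 0)"
  using DERIV_divide[OF assms(1,3,4)] assms(2) by simp

lemma crit:
  fixes r1 r2 x1 x2 A1 A2 :: "real^3"
  assumes A1: "A1 = acc1 mu lam a a0 0 r1 r2 x1 x2" and A2: "A2 = acc2 mu lam a a0 0 r1 r2 x1 x2"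
    and n1: "norm x1 = 1" and n2: "norm x2 = 1" and rr: "r1 \<noteq> r2" and r10: "r1 \<noteq> 0" and r20: "r2 \<noteq> 0"
    and o1: "x1 \<bullet> (r1 - r2) = 0" and o2: "x2 \<bullet> (r1 - r2) = 0"
    and o3: "x1 \<bullet> r1 = 0" and o4: "x2 \<bullet> r2 = 0"
    and e1: "A1 \<bullet> (r1 - r2) + x1 \<bullet> (x1 - x2) = 0"
    and e2: "A2 \<bullet> (r1 - r2) + x2 \<bullet> (x1 - x2) = 0"
    and e3: "A1 \<bullet> r1 + x1 \<bullet> x1 = 0" and e4: "A2 \<bullet> r2 + x2 \<bullet> x2 = 0"
    and e5: "A1 \<bullet> x2 + x1 \<bullet> A2 = 0"
  shows "circling_equilibrium mu lam a a0 0 r1 r2 x1 x2"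
proof -
  have lin: "\<And>t. (r1 + t *\<^sub>R x1) - (r2 + t *\<^sub>R x2) = (r1 - r2) + t *\<^sub>R (x1 - x2)"
    by (simp add: algebra_simps)
  have rn: "r1 - r2 \<noteq> 0" using rr by simp
  have dn: "((\<lambda>t. norm ((r1 - r2) + t *\<^sub>R (x1 - x2))) has_real_derivative ((r1 - r2) \<bullet> (x1 - x2) / norm (r1 - r2))) (at 0)"
    by (rule d_norm[OF rn])
  have dn1: "((\<lambda>t. norm (r1 + t *\<^sub>R x1)) has_real_derivative (r1 \<bullet> x1 / norm r1)) (at 0)"
    by (rule d_norm[OF r10])
  have dn2: "((\<lambda>t. norm (r2 + t *\<^sub>R x2)) has_real_derivative (r2 \<bullet> x2 / norm r2)) (at 0)"
    by (rule d_norm[OF r20])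
  have q: "(r1 - r2) \<bullet> (x1 - x2) = 0" using o1 o2 by (simp add: inner_diff_left inner_diff_right inner_commute)
  have D0: "((\<lambda>t. xbar1 (r1 + t *\<^sub>R x1) (r2 + t *\<^sub>R x2) (x1 + t *\<^sub>R A1)) has_real_derivative 0) (at 0)"
    unfolding xbar1_def rho_def lin
    by (rule d_quot0[OF _ _ dn]) (use d_lin_inner[of x1 A1 "r1 - r2" "x1 - x2"] e1 o1 rn in \<open>auto simp: inner_commute\<close>)
  have D1: "((\<lambda>t. xbar2 (r1 + t *\<^sub>R x1) (r2 + t *\<^sub>R x2) (x2 + t *\<^sub>R A2)) has_real_derivative 0) (at 0)"
    unfolding xbar2_def rho_def lin
    by (rule d_quot0[OF _ _ dn]) (use DERIV_minus[OF d_lin_inner[of x2 A2 "r1 - r2" "x1 - x2"]] e2 o2 rn in \<open>auto simp: inner_commute\<close>)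
  have D2: "((\<lambda>t. xbar1b1 0 (r1 + t *\<^sub>R x1) (x1 + t *\<^sub>R A1)) has_real_derivative 0) (at 0)"
    unfolding xbar1b1_def rho1b1_def rb0 diff_zero
    by (rule d_quot0[OF _ _ dn1[simplified]]) (use d_lin_inner[of x1 A1 r1 x1] e3 o3 r10 in \<open>auto simp: inner_commute\<close>)
  have D3: "((\<lambda>t. xbar2b2 0 (r2 + t *\<^sub>R x2) (x2 + t *\<^sub>R A2)) has_real_derivative 0) (at 0)"
    unfolding xbar2b2_def rho2b2_def rb0 diff_zero
    by (rule d_quot0[OF _ _ dn2[simplified]]) (use d_lin_inner[of x2 A2 r2 x2] e4 o4 r20 in \<open>auto simp: inner_commute\<close>)
  have D4: "((\<lambda>t. xtilde (x1 + t *\<^sub>R A1) (x2 + t *\<^sub>R A2)) has_real_derivative 0) (at 0)"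
    unfolding xtilde_def using d_lin_inner[of x1 A1 x2 A2] e5 by simp
  have D5: "((\<lambda>t. rho (r1 + t *\<^sub>R x1) (r2 + t *\<^sub>R x2)) has_real_derivative 0) (at 0)"
    unfolding rho_def lin using dn q by simp
  have D6: "((\<lambda>t. rho1b1 0 (r1 + t *\<^sub>R x1)) has_real_derivative 0) (at 0)"
    unfolding rho1b1_def rb0 using dn1 o3 by (simp add: inner_commute)
  have D7: "((\<lambda>t. rho2b2 0 (r2 + t *\<^sub>R x2)) has_real_derivative 0) (at 0)"
    unfolding rho2b2_def rb0 using dn2 o4 by (simp add: inner_commute)
  have Dc: "\<And>v. ((\<lambda>t. rhat 0 (v t)) has_real_derivative 0) (at 0)" "\<And>v. ((\<lambda>t. xhat 0 (v t)) has_real_derivative 0) (at 0)"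
    unfolding rhat_def xhat_def rb0 by simp_all
  show ?thesis
    unfolding circling_equilibrium_def
  proof (intro conjI allI impI)
    show "0 < rho r1 r2" using rr by (simp add: rho_def)
    show "0 < rho1b1 0 r1" using r10 by (simp add: rho1b1_def rb0)
    show "0 < rho2b2 0 r2" using r20 by (simp add: rho2b2_def rb0)
    fix i assume "i < length (shape_vars 0 r1 r2 x1 x2)"
    then have "i < 12" by (simp add: shape_vars_def)
    then have "i = 0 \<or> i = 1 \<or> i = 2 \<or> i = 3 \<or> i = 4 \<or> i = 5 \<or> i = 6 \<or> i = 7 \<or> i = 8 \<or> i = 9 \<or> i = 10 \<or> i = 11" by arith
    then show "((\<lambda>t. shape_vars 0 (r1 + t *\<^sub>R x1) (r2 + t *\<^sub>R x2)
                (x1 + t *\<^sub>R acc1 mu lam a a0 0 r1 r2 x1 x2)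
                (x2 + t *\<^sub>R acc2 mu lam a a0 0 r1 r2 x1 x2) ! i)
          has_real_derivative 0) (at 0)"
      unfolding A1[symmetric] A2[symmetric]
      using D0 D1 D2 D3 D4 D5 D6 D7 Dc by (auto simp: shape_vars_def)
  qed (use n1 n2 in auto)
qed

lemma vec3_ops:
  "vector [a1,a2,a3] - (vector [b1,b2,b3] :: real^3) = vector [a1-b1,a2-b2,a3-b3]"
  "vector [a1,a2,a3] + (vector [b1,b2,b3] :: real^3) = vector [a1+b1,a2+b2,a3+b3]"
  "c *\<^sub>R (vector [a1,a2,a3] :: real^3) = vector [c*a1,c*a2,c*a3]"
  "- (vector [a1,a2,a3] :: real^3) = vector [-a1,-a2,-a3]"
  "(vector [a1,a2,a3] :: real^3) = 0 \<longleftrightarrow> a1 = 0 \<and> a2 = 0 \<and> a3 = 0"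
  "(vector [a1,a2,a3] :: real^3) = vector [b1,b2,b3] \<longleftrightarrow> a1 = b1 \<and> a2 = b2 \<and> a3 = b3"
  by (simp_all add: vec_eq_iff forall_3)

lemma vec3_norm: "norm (vector [a1,a2,a3] :: real^3) = sqrt (a1^2+a2^2+a3^2)"
  by (simp add: norm_eq_sqrt_inner vec3_inner power2_eq_square)

lemma partA:
  fixes mu lam a a0 :: real
  assumes "mu > 0" and s: "(1 - lam) * a + lam * a0 < 0"
  shows "\<exists>r1 r2 x1 x2 :: real^3.
         circling_equilibrium mu lam a a0 0 r1 r2 x1 x2 \<and>
         xbar1 r1 r2 x1 = 0 \<and> xbar2 r1 r2 x2 = 0 \<and>
         xbar1b1 0 r1 x1 = 0 \<and> xbar2b2 0 r2 x2 = 0 \<and>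
         xtilde x1 x2 = -1 \<and>
         rho1b1 0 r1 = 1 / (- mu * ((1 - lam) * a + lam * a0)) \<and>
         rho2b2 0 r2 = 1 / (- mu * ((1 - lam) * a + lam * a0)) \<and>
         rho r1 r2 = 2 * rho1b1 0 r1"
proof -
  define R where "R = 1 / (- mu * ((1 - lam) * a + lam * a0))"
  have R0: "R > 0" unfolding R_def using assms by (simp add: mult_pos_neg)
  have ne: "mu * ((1 - lam) * a + lam * a0) \<noteq> 0" using assms by simp
  have Rm: "mu * ((1 - lam) * a + lam * a0) * R = -1" unfolding R_def using ne
    by (metis divide_minus_right mult.commute mult_minus_left nonzero_mult_div_cancel_left times_divide_eq_right)
  define r1 :: "real^3" where "r1 = vector [R,0,0]"
  define r2 :: "real^3" where "r2 = vector [-R,0,0]"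
  define x1 :: "real^3" where "x1 = vector [0,1,0]"
  define x2 :: "real^3" where "x2 = vector [0,-1,0]"
  note defs = r1_def r2_def x1_def x2_def
  have s4: "sqrt (4 * R\<^sup>2) = 2 * R"
    by (rule real_sqrt_unique) (use R0 in \<open>auto simp: power2_eq_square\<close>)
  have rho: "rho r1 r2 = 2*R" using R0 s4 by (simp add: rho_def defs vec3_ops vec3_norm)
  have rho1: "rho1b1 0 r1 = R" using R0 by (simp add: rho1b1_def rb0 defs vec3_ops vec3_norm)
  have rho2: "rho2b2 0 r2 = R" using R0 by (simp add: rho2b2_def rb0 defs vec3_ops vec3_norm)
  have xb: "xbar1 r1 r2 x1 = 0" "xbar2 r1 r2 x2 = 0" "xbar1b1 0 r1 x1 = 0" "xbar2b2 0 r2 x2 = 0"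
     "xtilde x1 x2 = -1"
    by (simp_all add: xbar1_def xbar2_def xbar1b1_def xbar2b2_def xtilde_def rb0 defs vec3_ops vec3_inner)
  have A1: "acc1 mu lam a a0 0 r1 r2 x1 x2 = vector [mu * ((1 - lam) * a + lam * a0),0,0]"
    unfolding acc1_def xb rho rho1 using R0 by (simp add: rb0 defs vec3_ops field_simps)
  have A2: "acc2 mu lam a a0 0 r1 r2 x1 x2 = vector [- mu * ((1 - lam) * a + lam * a0),0,0]"
    unfolding acc2_def xb rho rho2 using R0 by (simp add: rb0 defs vec3_ops field_simps)
  have ce: "circling_equilibrium mu lam a a0 0 r1 r2 x1 x2"
    apply (rule crit[OF A1[symmetric] A2[symmetric]])
    unfolding defs
    using R0 Rm by (simp_all add: vec3_ops vec3_inner vec3_norm algebra_simps)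
  show ?thesis
    apply (rule exI[of _ r1], rule exI[of _ r2], rule exI[of _ x1], rule exI[of _ x2])
    using ce xb rho rho1 rho2 R_def by simp
qed

lemma partB:
  fixes mu lam a a0 :: real
  assumes mu: "mu > 0" and l0: "0 < lam" and l1: "lam < 1"
    and s: "(1 - lam) * a + lam * a0 < 0" and an: "a0 < 0" and ap: "a > 0"
  shows "\<exists>r1 r2 x1 x2 :: real^3.
         circling_equilibrium mu lam a a0 0 r1 r2 x1 x2 \<and>
         xbar1 r1 r2 x1 = 0 \<and> xbar2 r1 r2 x2 = 0 \<and>
         xbar1b1 0 r1 x1 = 0 \<and> xbar2b2 0 r2 x2 = 0 \<and>
         xtilde x1 x2 = 1 \<and>
         rho1b1 0 r1 = lam * a0 / (mu * ((1 - lam)^2 * a^2 - lam^2 * a0^2)) \<and>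
         rho2b2 0 r2 = lam * a0 / (mu * ((1 - lam)^2 * a^2 - lam^2 * a0^2)) \<and>
         rho r1 r2 = -2 * (1 - lam) * a / (mu * ((1 - lam)^2 * a^2 - lam^2 * a0^2))"
proof -
  define D where "D = (1 - lam)^2 * a^2 - lam^2 * a0^2"
  have u0: "0 < (1 - lam) * a" using l1 ap by simp
  have u1: "(1 - lam) * a < - (lam * a0)" using s by simp
  have D0: "D < 0"
  proof -
    have "((1 - lam) * a)^2 < (- (lam * a0))^2" by (rule power_strict_mono[OF u1]) (use u0 in auto)
    then show ?thesis unfolding D_def by (simp add: power_mult_distrib)
  qed
  have la0: "lam * a0 < 0" using l0 an by (simp add: mult_pos_neg)
  define R where "R = lam * a0 / (mu * D)"
  have R0: "R > 0" unfolding R_def using la0 mu D0 by (simp add: divide_neg_neg mult_pos_neg)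
  define q where "q = - (1 - lam) * a * R / (lam * a0)"
  have q0: "q > 0"
  proof -
    have "0 < (1 - lam) * a * R" using u0 R0 by simp
    then have "(1 - lam) * a * R / (lam * a0) < 0" using la0 by (simp add: divide_pos_neg)
    moreover have "q = - ((1 - lam) * a * R / (lam * a0))" unfolding q_def
      by (simp only: minus_divide_left mult_minus_left)
    ultimately show ?thesis by linarith
  qed
  have qf: "lam * a0 * q = - (1 - lam) * a * R" unfolding q_def
  proof -
    have ne: "lam * a0 \<noteq> 0" using l0 an by simp
    show "lam * a0 * (- (1 - lam) * a * R / (lam * a0)) = - (1 - lam) * a * R" using ne by simp
  qed
  have qR: "q < R"
  proof -
    have "(1 - lam) * a * R < - (lam * a0) * R" using mult_strict_right_mono[OF u1 R0] .
    moreover have "- (lam * a0) * q = (1 - lam) * a * R" using qf by (simp add: algebra_simps)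
    ultimately have "- (lam * a0) * q < - (lam * a0) * R" by linarith
    moreover have "0 < - (lam * a0)" using la0 by simp
    ultimately show ?thesis using mult_less_cancel_left_pos by blast
  qed
  have m1: "mu * ((1 - lam) * a * q + lam * a0 * R) = -1"
  proof -
    have "lam * a0 * (mu * ((1 - lam) * a * q + lam * a0 * R)) = mu * ((1 - lam) * a * (lam * a0 * q) + (lam * a0)^2 * R)"
      by (simp add: algebra_simps power2_eq_square)
    also have "\<dots> = - mu * D * R" unfolding qf D_def by (simp add: algebra_simps power2_eq_square)
    also have "\<dots> = - (lam * a0)" unfolding R_def using mu D0 by simp
    finally have "lam * a0 * (mu * ((1 - lam) * a * q + lam * a0 * R)) = lam * a0 * (-1)" by simp
    moreover have "lam * a0 \<noteq> 0" using l0 an by simp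
    ultimately show ?thesis by (metis mult_left_cancel)
  qed
  define p where "p = sqrt (R^2 - q^2)"
  have pp: "p^2 = R^2 - q^2" unfolding p_def using qR q0 by (simp add: power_strict_mono)
  define r1 :: "real^3" where "r1 = vector [p,0,q]"
  define r2 :: "real^3" where "r2 = vector [p,0,-q]"
  define x1 :: "real^3" where "x1 = vector [0,1,0]"
  define x2 :: "real^3" where "x2 = vector [0,1,0]"
  note defs = r1_def r2_def x1_def x2_def
  have s4: "sqrt (4 * q\<^sup>2) = 2 * q"
    by (rule real_sqrt_unique) (use q0 in \<open>auto simp: power2_eq_square\<close>)
  have sR: "sqrt (p\<^sup>2 + q\<^sup>2) = R" unfolding pp using R0 by simp
  have rho: "rho r1 r2 = 2*q" using s4 by (simp add: rho_def defs vec3_ops vec3_norm)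
  have rho1: "rho1b1 0 r1 = R" using sR by (simp add: rho1b1_def rb0 defs vec3_ops vec3_norm)
  have rho2: "rho2b2 0 r2 = R" using sR by (simp add: rho2b2_def rb0 defs vec3_ops vec3_norm)
  have xb: "xbar1 r1 r2 x1 = 0" "xbar2 r1 r2 x2 = 0" "xbar1b1 0 r1 x1 = 0" "xbar2b2 0 r2 x2 = 0"
     "xtilde x1 x2 = 1"
    by (simp_all add: xbar1_def xbar2_def xbar1b1_def xbar2b2_def xtilde_def rb0 defs vec3_ops vec3_inner)
  have A1: "acc1 mu lam a a0 0 r1 r2 x1 x2 = vector [lam * mu * a0 * p / R, 0, (1 - lam) * mu * a + lam * mu * a0 * q / R]"
    unfolding acc1_def xb rho rho1 using R0 q0 by (simp add: rb0 defs vec3_ops field_simps)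
  have A2: "acc2 mu lam a a0 0 r1 r2 x1 x2 = vector [lam * mu * a0 * p / R, 0, - (1 - lam) * mu * a - lam * mu * a0 * q / R]"
    unfolding acc2_def xb rho rho2 using R0 q0 by (simp add: rb0 defs vec3_ops field_simps)
  have k1: "(1 - lam) * mu * a + lam * mu * a0 * q / R = 0"
  proof -
    have z: "(1 - lam) * a * R + lam * a0 * q = 0" using qf by (simp add: algebra_simps)
    have "(1 - lam) * mu * a + lam * mu * a0 * q / R = mu * ((1 - lam) * a * R + lam * a0 * q) / R"
      using R0 by (simp add: field_simps)
    then show ?thesis using z by simp
  qed
  have k2: "lam * mu * a0 * p / R * p + ((1 - lam) * mu * a + lam * mu * a0 * q / R) * q + 1 = 0"
  proof -
    have "lam * mu * a0 * p / R * p + lam * mu * a0 * q / R * q = lam * mu * a0 * (p^2 + q^2) / R"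
      using R0 by (simp add: field_simps power2_eq_square)
    also have "\<dots> = lam * mu * a0 * R" unfolding pp using R0 by (simp add: power2_eq_square)
    finally show ?thesis using m1 by (simp add: algebra_simps)
  qed
  have ce: "circling_equilibrium mu lam a a0 0 r1 r2 x1 x2"
    apply (rule crit[OF A1[symmetric] A2[symmetric]])
    unfolding defs
    using R0 q0 k1 k2 by (simp_all add: vec3_ops vec3_inner vec3_norm algebra_simps)
  have rhof: "2 * q = -2 * (1 - lam) * a / (mu * D)"
  proof -
    have "lam \<noteq> 0" "a0 \<noteq> 0" "D \<noteq> 0" "mu \<noteq> 0" using l0 an D0 mu by auto
    then show ?thesis unfolding q_def R_def by (simp add: field_simps)
  qed
  show ?thesis
    apply (rule exI[of _ r1], rule exI[of _ r2], rule exI[of _ x1], rule exI[of _ x2])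
    using ce xb rho rho1 rho2 rhof by (simp add: R_def D_def)
qed


theorem proposition4p2:
  fixes mu lam a a0 :: real
  assumes "mu > 0" and "0 < lam" and "lam < 1"
    and "-1 \<le> a" and "a \<le> 1"
    and "-1 \<le> a0" and "a0 \<le> 1" and "a0 \<noteq> 0"
  shows
   "((1 - lam) * a + lam * a0 < 0 \<longrightarrow>
      (\<exists>r1 r2 x1 x2 :: real^3.
         circling_equilibrium mu lam a a0 0 r1 r2 x1 x2 \<and>
         xbar1 r1 r2 x1 = 0 \<and> xbar2 r1 r2 x2 = 0 \<and>
         xbar1b1 0 r1 x1 = 0 \<and> xbar2b2 0 r2 x2 = 0 \<and>
         xtilde x1 x2 = -1 \<and>
         rho1b1 0 r1 = 1 / (- mu * ((1 - lam) * a + lam * a0)) \<and>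
         rho2b2 0 r2 = 1 / (- mu * ((1 - lam) * a + lam * a0)) \<and>
         rho r1 r2 = 2 * rho1b1 0 r1))
    \<and>
    ((1 - lam) * a + lam * a0 < 0 \<and> a0 < 0 \<and> a > 0 \<longrightarrow>
      (\<exists>r1 r2 x1 x2 :: real^3.
         circling_equilibrium mu lam a a0 0 r1 r2 x1 x2 \<and>
         xbar1 r1 r2 x1 = 0 \<and> xbar2 r1 r2 x2 = 0 \<and>
         xbar1b1 0 r1 x1 = 0 \<and> xbar2b2 0 r2 x2 = 0 \<and>
         xtilde x1 x2 = 1 \<and>
         rho1b1 0 r1 = lam * a0 / (mu * ((1 - lam)^2 * a^2 - lam^2 * a0^2)) \<and>
         rho2b2 0 r2 = lam * a0 / (mu * ((1 - lam)^2 * a^2 - lam^2 * a0^2)) \<and>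
         rho r1 r2 = -2 * (1 - lam) * a / (mu * ((1 - lam)^2 * a^2 - lam^2 * a0^2))))"
  proof (intro conjI impI)
  assume "(1 - lam) * a + lam * a0 < 0"
  then show "\<exists>r1 r2 x1 x2 :: real^3.
         circling_equilibrium mu lam a a0 0 r1 r2 x1 x2 \<and>
         xbar1 r1 r2 x1 = 0 \<and> xbar2 r1 r2 x2 = 0 \<and>
         xbar1b1 0 r1 x1 = 0 \<and> xbar2b2 0 r2 x2 = 0 \<and>
         xtilde x1 x2 = -1 \<and>
         rho1b1 0 r1 = 1 / (- mu * ((1 - lam) * a + lam * a0)) \<and>
         rho2b2 0 r2 = 1 / (- mu * ((1 - lam) * a + lam * a0)) \<and>
         rho r1 r2 = 2 * rho1b1 0 r1"
    using partA assms(1) by blast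
next
  assume h: "(1 - lam) * a + lam * a0 < 0 \<and> a0 < 0 \<and> a > 0"
  show "\<exists>r1 r2 x1 x2 :: real^3.
         circling_equilibrium mu lam a a0 0 r1 r2 x1 x2 \<and>
         xbar1 r1 r2 x1 = 0 \<and> xbar2 r1 r2 x2 = 0 \<and>
         xbar1b1 0 r1 x1 = 0 \<and> xbar2b2 0 r2 x2 = 0 \<and>
         xtilde x1 x2 = 1 \<and>
         rho1b1 0 r1 = lam * a0 / (mu * ((1 - lam)^2 * a^2 - lam^2 * a0^2)) \<and>
         rho2b2 0 r2 = lam * a0 / (mu * ((1 - lam)^2 * a^2 - lam^2 * a0^2)) \<and>
         rho r1 r2 = -2 * (1 - lam) * a / (mu * ((1 - lam)^2 * a^2 - lam^2 * a0^2))"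
    using partB[OF assms(1,2,3)] h by blast
qed

end
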